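(* $$\sum _{m=0}^\infty\sum_{n=0}^\infty \frac{\binom{2 m}{m}^2 \binom{2 n}{n}^2 }{ 16^{m + n} (m+n+1) (2 m+3) } = \frac{7 \zeta (3) - 4 G}{\pi ^2}.$$
   Context: $\zeta$ is the Riemann zeta function and $G = \sum_{n\ge 0}\frac{(-1)^n}{(2n+1)^2}$ is Catalan's constant. *)

theory Defs
  imports "HOL-Analysis.Analysis"
begin

definition zeta :: "real \<Rightarrow> real" where
  "zeta s = (\<Sum>n. 1 / (real (Suc n)) powr s)"

definition catalan :: real where
  "catalan = (\<Sum>n. (-1) ^ n / (2 * real n + 1) ^ 2)"

end

theory Submission
  imports Defs
begin

definition cc :: "nat \<Rightarrow> real" where
  "cc n = (real ((2*n) choose n))^2 / 16^n"

lemma cc_0 [simp]: "cc 0 = 1" by (simp add: cc_def)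

lemma fact_SS: "(fact (Suc (Suc m))::real) = (real m+2)*(real m+1)*fact m"
  by (simp add: algebra_simps)

lemma binom_Suc: "real ((2*Suc n) choose Suc n) = real ((2*n) choose n) * (4*real n+2) / (real n+1)"
proof -
  have e: "2*Suc n = Suc (Suc (2*n))" by simp
  have "real ((2*Suc n) choose Suc n) = fact (Suc (Suc (2*n))) / (fact (Suc n) * fact (Suc n))"
    unfolding e by (subst binomial_fact) auto
  also have "\<dots> = ((real (2*n)+2)*(real (2*n)+1)*fact (2*n)) / (((real n+1)*fact n) * ((real n+1)*fact n))"
    by (simp only: fact_SS fact_Suc of_nat_Suc) (simp add: algebra_simps)
  also have "fact (2*n) = real ((2*n) choose n) * (fact n * fact n)"
    by (subst binomial_fact) (auto simp: mult_2)
  finally have X: "real ((2*Suc n) choose Suc n) = ((real (2*n)+2)*(real (2*n)+1)*(real ((2*n) choose n) * (fact n * fact n))) / (((real n+1)*fact n) * ((real n+1)*fact n))" .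
  define B where "B = real ((2*n) choose n)"
  define F where "F = (fact n :: real)"
  have F: "F > 0" unfolding F_def by simp
  have "((real (2*n)+2)*(real (2*n)+1)*(B * (F * F))) / (((real n+1)*F) * ((real n+1)*F)) = B * (4*real n+2) / (real n+1)"
    using F by (simp add: divide_simps) (simp add: algebra_simps)
  then show ?thesis unfolding X B_def F_def .
qed

lemma cc_Suc: "cc (Suc n) = cc n * (2*real n+1)^2 / (2*real n+2)^2"
proof -
  define B where "B = real ((2*n) choose n)"
  have "cc (Suc n) = (B * (4*real n+2) / (real n+1))^2 / 16^(Suc n)"
    unfolding cc_def binom_Suc B_def ..
  also have "\<dots> = (B^2/16^n) * (2*real n+1)^2 / (2*real n+2)^2"
    by (simp add: divide_simps power2_eq_square) (simp add: algebra_simps)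
  finally show ?thesis unfolding cc_def B_def .
qed

lemma cc_nonneg: "cc n \<ge> 0" by (simp add: cc_def)

lemma cc_wallis_prod: "cc n * (2*real n+1) = 1 / (\<Prod>k=1..n. (4*real k^2) / (4*real k^2 - 1))"
proof (induction n)
  case 0 then show ?case by simp
next
  case (Suc n)
  have p: "(\<Prod>k=1..Suc n. (4*real k^2) / (4*real k^2 - 1)) =
        (\<Prod>k=1..n. (4*real k^2) / (4*real k^2 - 1)) * ((4*(real n+1)^2) / (4*(real n+1)^2 - 1))"
    by (simp add: prod.nat_ivl_Suc' add.commute)
  have pos: "(\<Prod>k=1..n. (4*real k^2) / (4*real k^2 - 1)) > 0"
  proof (rule prod_pos)
    fix k assume "k \<in> {1..n}"
    then have "real k \<ge> 1" by auto
    then have "4*real k^2 \<ge> 4" by (smt (verit) one_le_power)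
    then have "4*real k^2 > 0" "4*real k^2 - 1 > 0" by linarith+
    then show "(4*real k^2) / (4*real k^2 - 1) > 0" by (rule divide_pos_pos)
  qed
  have e: "4*(real n+1)^2 - 1 = (2*real n+1)*(2*real n+3)" by (simp add: algebra_simps power2_eq_square)
  define P where "P = (\<Prod>k=1..n. (4*real k^2) / (4*real k^2 - 1))"
  have P: "P > 0" using pos unfolding P_def .
  have "cc n * (2*real n+1) = 1 / P" using Suc.IH unfolding P_def .
  then have cn: "cc n = 1 / (P * (2*real n+1))" using P
    by (simp add: divide_simps) (simp add: algebra_simps)
  have "cc (Suc n) * (2 * real (Suc n) + 1) = 1 / (P * ((4*(real n+1)^2) / ((2*real n+1)*(2*real n+3))))"
    unfolding cc_Suc cn using P by (simp add: divide_simps power2_eq_square) (simp add: algebra_simps)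
  then show ?case unfolding p e P_def .
qed

lemma cc_lim2: "(\<lambda>n. cc n * (2*real n+1)) \<longlonglongrightarrow> 2/pi"
proof -
  have "(\<lambda>n. 1 / (\<Prod>k=1..n. (4*real k^2) / (4*real k^2 - 1))) \<longlonglongrightarrow> 1/(pi/2)"
    by (intro tendsto_divide tendsto_const wallis) auto
  then show ?thesis unfolding cc_wallis_prod by simp
qed

lemma cc_lim: "(\<lambda>n. real n * cc n) \<longlonglongrightarrow> 1/pi"
proof -
  have "(\<lambda>n. (cc n * (2*real n+1)) * (real n / (2*real n+1))) \<longlonglongrightarrow> 2/pi * (1/2)"
    by (intro tendsto_mult cc_lim2) real_asymp
  moreover have "(\<lambda>n. (cc n * (2*real n+1)) * (real n / (2*real n+1))) = (\<lambda>n. real n * cc n)"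
    by (rule ext) (simp add: field_simps)
  ultimately show ?thesis by simp
qed

lemma cc_le: "cc n * (2*real n+1) \<le> 1"
proof (induction n)
  case 0 then show ?case by simp
next
  case (Suc n)
  have "cc (Suc n) * (2*real (Suc n)+1) = (cc n * (2*real n+1)) * ((2*real n+1)*(2*real n+3)/(2*real n+2)^2)"
    unfolding cc_Suc by (simp add: field_simps power2_eq_square)
  also have "\<dots> \<le> 1 * 1"
  proof (rule mult_mono)
    have "(2*real n+1)*(2*real n+3) \<le> (2*real n+2)^2" by (simp add: power2_eq_square algebra_simps)
    moreover have "(2*real n+2)^2 > 0" by simp
    ultimately show "(2*real n+1)*(2*real n+3)/(2*real n+2)^2 \<le> 1" by simp
    show "0 \<le> (2*real n+1)*(2*real n+3)/(2*real n+2)^2" by simp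
  qed (use Suc in auto)
  finally show ?case by simp
qed

primrec hh :: "nat \<Rightarrow> nat \<Rightarrow> real" where
  "hh m 0 = 1"
| "hh m (Suc k) = hh m k * (real m - real k) / (real m + real k + 1)"

definition mu :: "nat \<Rightarrow> nat \<Rightarrow> real" where
  "mu m k = hh m k / (real m + real k + 1)"

lemma hh_zero: "m < k \<Longrightarrow> hh m k = 0"
proof (induction k)
  case 0 then show ?case by simp
next
  case (Suc k)
  show ?case
  proof (cases "m < k")
    case True then show ?thesis using Suc by simp
  next
    case False then have "k = m" using Suc.prems by simp
    then show ?thesis by simp
  qed
qed

lemma hh_nonneg: "hh m k \<ge> 0"
proof (induction k)
  case 0 then show ?case by simp
next
  case (Suc k)
  show ?case
  proof (cases "m < k")
    case True then show ?thesis using hh_zero[of m "Suc k"] by simp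
  next
    case False then have "real m - real k \<ge> 0" by simp
    then show ?thesis using Suc by simp
  qed
qed

lemma mu_nonneg: "mu m k \<ge> 0"
  unfolding mu_def using hh_nonneg[of m k] by simp

lemma mu_zero: "m < k \<Longrightarrow> mu m k = 0"
  unfolding mu_def using hh_zero by simp

lemma hh_shift: "hh m k * (real m + 1)^2 = hh (Suc m) k * (real m + 1 - real k) * (real m + 1 + real k)"
proof (induction k)
  case 0 then show ?case by (simp add: power2_eq_square)
next
  case (Suc k)
  define X where "X = hh (Suc m) k"
  have IH: "hh m k * (real m + 1)^2 = X * (real m + 1 - real k) * (real m + 1 + real k)"
    using Suc.IH unfolding X_def .
  have "hh m (Suc k) * (real m + 1)^2 = (hh m k * (real m + 1)^2) * (real m - real k) / (real m + real k + 1)"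
    by simp
  also have "\<dots> = X * (real m + 1 - real k) * (real m - real k)"
    unfolding IH by (simp add: divide_simps)
  also have "\<dots> = hh (Suc m) (Suc k) * (real m + 1 - real (Suc k)) * (real m + 1 + real (Suc k))"
    unfolding X_def by (simp add: divide_simps; simp add: algebra_simps)
  finally show ?case .
qed

lemma mu_shift: "mu (Suc m) k * (real m + 1 - real k) * (real m + real k + 2) = mu m k * (real m + 1)^2"
proof -
  have "mu m k * (real m + 1)^2 = hh m k * (real m + 1)^2 / (real m + real k + 1)"
    unfolding mu_def by simp
  also have "\<dots> = hh (Suc m) k * (real m + 1 - real k)"
    unfolding hh_shift by (simp add: divide_simps)
  also have "\<dots> = mu (Suc m) k * (real m + 1 - real k) * (real m + real k + 2)"
    unfolding mu_def by (simp add: divide_simps; simp add: algebra_simps)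
  finally show ?thesis ..
qed

lemma hh_rho: "hh m k * (real m - real k) = real m * (\<Prod>i<k. (real m - real i - 1) / (real m + real i + 1))"
proof (induction k)
  case 0 then show ?case by simp
next
  case (Suc k)
  have "hh m (Suc k) * (real m - real (Suc k)) = (hh m k * (real m - real k)) * ((real m - real k - 1) / (real m + real k + 1))"
    by (simp add: algebra_simps)
  also have "\<dots> = real m * (\<Prod>i<Suc k. (real m - real i - 1) / (real m + real i + 1))"
    unfolding Suc.IH by simp
  finally show ?case .
qed

lemma prod_lim: "(\<lambda>m. \<Prod>i<k. (real m - real i - 1) / (real m + real i + 1)) \<longlonglongrightarrow> 1"
proof -
  have "(\<lambda>m. \<Prod>i<k. (real m - real i - 1) / (real m + real i + 1)) \<longlonglongrightarrow> (\<Prod>i<k. 1)"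
  proof (rule tendsto_prod)
    fix i assume "i \<in> {..<k}"
    show "(\<lambda>m. (real m - real i - 1) / (real m + real i + 1)) \<longlonglongrightarrow> 1" by real_asymp
  qed
  then show ?thesis by simp
qed

lemma col_sums: "(\<lambda>m. cc m * mu m k) sums (4 / (pi * (2*real k+1)^2))"
proof -
  define g where "g m = cc m * mu m k * (4 * (real m - real k) * (real m + real k + 1)) / (2*real k+1)^2" for m
  have d: "g (Suc m) - g m = cc m * mu m k" for m
  proof -
    have "g (Suc m) = cc (Suc m) * (mu (Suc m) k * (real m + 1 - real k) * (real m + real k + 2)) * 4 / (2*real k+1)^2"
      unfolding g_def by (simp add: algebra_simps)
    also have "\<dots> = cc m * mu m k * (2*real m+1)^2 / (2*real k+1)^2"
      unfolding mu_shift cc_Suc by (simp add: divide_simps; simp add: algebra_simps power2_eq_square)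
    finally have "g (Suc m) = cc m * mu m k * (2*real m+1)^2 / (2*real k+1)^2" .
    moreover have "(2*real k+1)^2 > 0" by simp
    ultimately show ?thesis unfolding g_def by (simp add: divide_simps; simp add: algebra_simps power2_eq_square)
  qed
  have g0: "g 0 = 0"
  proof (cases k)
    case 0 then show ?thesis by (simp add: g_def)
  next
    case (Suc j) then show ?thesis by (simp add: g_def mu_zero)
  qed
  have ge: "g m = 4 / (2*real k+1)^2 * ((real m * cc m) * (\<Prod>i<k. (real m - real i - 1) / (real m + real i + 1)))" for m
  proof -
    have "g m = 4 / (2*real k+1)^2 * cc m * (hh m k * (real m - real k))"
      unfolding g_def mu_def by (simp add: divide_simps; simp add: algebra_simps)
    then show ?thesis unfolding hh_rho by (simp add: algebra_simps)
  qed
  have "g \<longlonglongrightarrow> 4 / (2*real k+1)^2 * ((1/pi) * 1)"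
    unfolding ge by (intro tendsto_mult tendsto_const cc_lim prod_lim)
  then have "(\<lambda>m. g (Suc m) - g m) sums (4 / (2*real k+1)^2 * ((1/pi) * 1) - g 0)"
    by (rule telescope_sums)
  then show ?thesis unfolding d g0 by (simp add: field_simps)
qed

lemma swap_sums:
  fixes f :: "nat \<Rightarrow> nat \<Rightarrow> real"
  assumes col: "\<And>k. (\<lambda>m. f m k) sums F k"
  assumes colabs: "\<And>k. (\<lambda>m. \<bar>f m k\<bar>) sums G k"
  assumes Gs: "summable G"
  assumes row: "\<And>m. (\<lambda>k. f m k) sums R m"
  shows "R sums (\<Sum>k. F k)"
proof -
  have G0: "G k \<ge> 0" for k
    by (rule sums_le[OF _ sums_zero colabs[of k]]) auto
  have hG: "((\<lambda>m. \<bar>f m k\<bar>) has_sum G k) UNIV" for k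
    using colabs[of k] by (rule sums_nonneg_imp_has_sum) auto
  have Gon: "G summable_on UNIV"
    using Gs G0 by (rule summable_nonneg_imp_summable_on)
  have h1: "(\<lambda>p. \<bar>f (snd p) (fst p)\<bar>) summable_on (Sigma UNIV (\<lambda>_. UNIV))"
    by (rule summable_on_SigmaI[where g = G]) (use hG Gon in auto)
  have h2: "(\<lambda>(k,m). f m k) summable_on (UNIV \<times> UNIV)"
  proof (rule abs_summable_summable)
    show "(\<lambda>x. norm ((\<lambda>(k,m). f m k) x)) summable_on UNIV \<times> UNIV"
      using h1 by (rule summable_on_cong[THEN iffD1, rotated]) (auto simp: case_prod_beta)
  qed
  have h3: "(\<lambda>(m,k). f m k) summable_on (UNIV \<times> UNIV)"
    using h2 by (subst summable_on_swap) (simp add: case_prod_beta)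
  have rowon: "(\<lambda>k. f m k) summable_on UNIV" for m
    using summable_on_SigmaD1[OF h3, of m] by simp
  have colinf: "infsum (\<lambda>m. f m k) UNIV = F k" for k
  proof -
    have "summable (\<lambda>m. norm (f m k))" using colabs[of k] by (simp add: sums_iff)
    then have "((\<lambda>m. f m k) has_sum F k) UNIV" using col[of k] by (rule norm_summable_imp_has_sum)
    then show ?thesis by (rule infsumI)
  qed
  have rowinf: "infsum (\<lambda>k. f m k) UNIV = R m" for m
  proof -
    have "(\<lambda>k. f m k) sums infsum (\<lambda>k. f m k) UNIV"
      using rowon[of m] by (intro has_sum_imp_sums) (simp add: has_sum_infsum)
    then show ?thesis using row[of m] sums_unique2 by blast
  qed
  have sw: "infsum (\<lambda>k. infsum (\<lambda>m. f m k) UNIV) UNIV = infsum (\<lambda>m. infsum (\<lambda>k. f m k) UNIV) UNIV"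
    using infsum_swap_banach[of "\<lambda>k m. f m k" UNIV UNIV] h2 by simp
  have Fon: "(\<lambda>k. infsum (\<lambda>m. f m k) UNIV) summable_on UNIV"
    using summable_on_SigmaD[of "\<lambda>(k,m). f m k" UNIV "\<lambda>_. UNIV"] h2
    using summable_on_SigmaD1[OF h2] by (simp add: case_prod_beta)
  have Ron: "(\<lambda>m. infsum (\<lambda>k. f m k) UNIV) summable_on UNIV"
    using summable_on_SigmaD[of "\<lambda>(m,k). f m k" UNIV "\<lambda>_. UNIV"] h3 rowon
    by (simp add: case_prod_beta)
  have "F sums infsum F UNIV"
    using Fon unfolding colinf by (intro has_sum_imp_sums) (simp add: has_sum_infsum)
  then have e1: "infsum F UNIV = (\<Sum>k. F k)" by (simp add: sums_iff)
  have "R sums infsum R UNIV"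
    using Ron unfolding rowinf by (intro has_sum_imp_sums) (simp add: has_sum_infsum)
  moreover have "infsum R UNIV = infsum F UNIV"
    using sw unfolding colinf rowinf by simp
  ultimately show ?thesis using e1 by simp
qed

definition SS :: "nat \<Rightarrow> real" where
  "SS m = (\<Sum>n. cc n / (real n + real m + 1))"

definition AA :: "nat \<Rightarrow> real" where
  "AA m = (\<Sum>j<Suc m. cc j)"

lemma S0_sums: "(\<lambda>n. cc n / (real n + 1)) sums (4/pi)"
proof -
  have "(\<lambda>n. cc n * mu n 0) sums (4 / (pi * (2*real 0+1)^2))" by (rule col_sums)
  then show ?thesis by (simp add: mu_def)
qed

lemma S_summable: "summable (\<lambda>n. cc n / (real n + real m + 1))"
proof (rule summable_comparison_test[OF _ S0_sums[THEN sums_summable]])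
  show "\<exists>N. \<forall>n\<ge>N. norm (cc n / (real n + real m + 1)) \<le> cc n / (real n + 1)"
    using cc_nonneg by (auto intro!: divide_left_mono)
qed

lemma S_sums: "(\<lambda>n. cc n / (real n + real m + 1)) sums SS m"
  unfolding SS_def using S_summable by (rule summable_sums)

lemma SS0: "SS 0 = 4/pi"
  using S0_sums S_sums[of 0] sums_unique2 by simp

lemma SS_rec: "(2*real m+3)^2 * SS (Suc m) - 4*(real m+1)^2 * SS m = 4/pi"
proof -
  define g where "g n = 4 * (real n)^2 * cc n / (real n + real m + 1)" for n
  have d: "g (Suc n) - g n = (2*real m+3)^2 * (cc n / (real n + real (Suc m) + 1)) - 4*(real m+1)^2 * (cc n / (real n + real m + 1))" for n
  proof -
    define x where "x = real n"
    define y where "y = real m"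
    define c where "c = cc n"
    have x0: "x \<ge> 0" "y \<ge> 0" unfolding x_def y_def by auto
    have sq: "(2*x+2)^2 = 4*(x+1)^2" by (simp add: power2_eq_square algebra_simps)
    have "g (Suc n) = 4*(x+1)^2*(c*(2*x+1)^2/(2*x+2)^2)/(x+1+y+1)"
      unfolding g_def cc_Suc x_def y_def c_def by (simp add: add_ac)
    also have "\<dots> = c*(2*x+1)^2/(x+y+2)"
      unfolding sq using x0 by (simp add: divide_simps; simp add: algebra_simps)
    finally have gS: "g (Suc n) = c*(2*x+1)^2/(x+y+2)" .
    have gn: "g n = 4*x^2*c/(x+y+1)" unfolding g_def x_def y_def c_def ..
    have poly: "(2*x+1)^2*(x+y+1) - 4*x^2*(x+y+2) = (2*y+3)^2*(x+y+1) - 4*(y+1)^2*(x+y+2)"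
      by (simp add: power2_eq_square algebra_simps)
    have P: "x+y+2 > 0" "x+y+1 > 0" using x0 by auto
    have l: "c*(2*x+1)^2/(x+y+2) - 4*x^2*c/(x+y+1) = c*((2*x+1)^2*(x+y+1) - 4*x^2*(x+y+2))/((x+y+2)*(x+y+1))"
      using P by (simp add: field_simps)
    have r: "(2*y+3)^2 * (c / (x + (y+1) + 1)) - 4*(y+1)^2 * (c / (x + y + 1)) = c*((2*y+3)^2*(x+y+1) - 4*(y+1)^2*(x+y+2))/((x+y+2)*(x+y+1))"
      using P by (simp add: field_simps)
    have "g (Suc n) - g n = (2*y+3)^2 * (c / (x + (y+1) + 1)) - 4*(y+1)^2 * (c / (x + y + 1))"
      unfolding gS gn l r poly ..
    then show ?thesis unfolding x_def y_def c_def by (simp add: add_ac)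
  qed
  have "g \<longlonglongrightarrow> 4 * ((1/pi) * 1)"
  proof -
    have "(\<lambda>n. 4 * ((real n * cc n) * (real n / (real n + real m + 1)))) \<longlonglongrightarrow> 4 * ((1/pi) * 1)"
      by (intro tendsto_mult tendsto_const cc_lim) real_asymp
    moreover have "(\<lambda>n. 4 * ((real n * cc n) * (real n / (real n + real m + 1)))) = g"
      by (rule ext) (simp add: g_def power2_eq_square)
    ultimately show ?thesis by simp
  qed
  then have "(\<lambda>n. g (Suc n) - g n) sums (4 * ((1/pi) * 1) - g 0)" by (rule telescope_sums)
  then have s1: "(\<lambda>n. (2*real m+3)^2 * (cc n / (real n + real (Suc m) + 1)) - 4*(real m+1)^2 * (cc n / (real n + real m + 1))) sums (4/pi)"
    unfolding d by (simp add: g_def)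
  have s2: "(\<lambda>n. (2*real m+3)^2 * (cc n / (real n + real (Suc m) + 1)) - 4*(real m+1)^2 * (cc n / (real n + real m + 1))) sums ((2*real m+3)^2 * SS (Suc m) - 4*(real m+1)^2 * SS m)"
    by (intro sums_diff sums_mult S_sums)
  show ?thesis using sums_unique2[OF s2 s1] .
qed

lemma SS_closed: "(2*real m+1)^2 * cc m * SS m = 4/pi * AA m"
proof (induction m)
  case 0 then show ?case by (simp add: SS0 AA_def)
next
  case (Suc m)
  have "(2*real (Suc m)+1)^2 * cc (Suc m) * SS (Suc m) = cc (Suc m) * ((2*real m+3)^2 * SS (Suc m))"
    by (simp add: algebra_simps)
  also have "(2*real m+3)^2 * SS (Suc m) = 4/pi + 4*(real m+1)^2 * SS m"
    using SS_rec[of m] by simp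
  also have "cc (Suc m) * (4/pi + 4*(real m+1)^2 * SS m) = 4/pi * cc (Suc m) + (2*real m+1)^2 * cc m * SS m"
    unfolding cc_Suc by (simp add: divide_simps; simp add: algebra_simps power2_eq_square)
  also have "\<dots> = 4/pi * AA (Suc m)"
    unfolding Suc.IH by (simp add: AA_def algebra_simps)
  finally show ?case .
qed

lemma summable_sq: "summable (\<lambda>k. 1 / (2*real k+1)^2)"
proof -
  have "summable (\<lambda>n. inverse (real n ^ 2))" by (rule inverse_power_summable) simp
  then have s: "summable (\<lambda>n. inverse (real (Suc n) ^ 2))" by (subst summable_Suc_iff)
  show ?thesis
  proof (rule summable_comparison_test[OF _ s])
    show "\<exists>N. \<forall>n\<ge>N. norm (1 / (2*real n+1)^2) \<le> inverse (real (Suc n) ^ 2)"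
    proof (intro exI allI impI)
      fix n :: nat
      have "real (Suc n)^2 \<le> (2*real n+1)^2" by (intro power_mono) auto
      then show "norm (1 / (2*real n+1)^2) \<le> inverse (real (Suc n) ^ 2)"
        by (simp add: divide_simps del: of_nat_Suc)
    qed
  qed
qed

lemma summable_cube: "summable (\<lambda>k. 1 / (2*real k+1)^3)"
proof (rule summable_comparison_test[OF _ summable_sq])
  show "\<exists>N. \<forall>n\<ge>N. norm (1 / (2*real n+1)^3) \<le> 1 / (2*real n+1)^2"
  proof (intro exI allI impI)
    fix n :: nat
    have "(2*real n+1)^2 \<le> (2*real n+1)^3" by (rule power_increasing) auto
    then show "norm (1 / (2*real n+1)^3) \<le> 1 / (2*real n+1)^2"
      by (simp add: divide_simps)
  qed
qed

definition sig :: "nat \<Rightarrow> real" where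
  "sig m = (\<Sum>k<Suc m. mu m k / (2*real k+1))"

lemma T_id: "(2*real m+3)^2 * (mu (Suc m) k / (2*real k+1)) - 4*(real m+1)^2 * (mu m k / (2*real k+1))
    = hh (Suc m) k - hh (Suc m) (Suc k)"
proof -
  define X where "X = hh (Suc m) k"
  define x where "x = real m"
  define z where "z = real k"
  have x0: "x \<ge> 0" "z \<ge> 0" unfolding x_def z_def by auto
  have e1: "mu (Suc m) k = X / (x+z+2)" unfolding mu_def X_def x_def z_def by (simp add: add_ac)
  have e2: "hh (Suc m) (Suc k) = X * (x+1-z)/(x+z+2)" unfolding X_def x_def z_def by (simp add: add_ac)
  have e3: "(x+1)^2 * mu m k = X * (x+1-z)"
  proof -
    have "(x+1)^2 * mu m k = (hh m k * (real m + 1)^2) / (x+z+1)" unfolding mu_def x_def z_def by simp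
    also have "\<dots> = X * (x+1-z)" unfolding hh_shift X_def x_def z_def using x0
      by (simp add: divide_simps; simp add: algebra_simps)
    finally show ?thesis .
  qed
  have "(2*x+3)^2 * (X / (x+z+2) / (2*z+1)) - 4*(X * (x+1-z)) / (2*z+1) = X - X * (x+1-z)/(x+z+2)"
  proof -
    have poly: "(2*x+3)^2 - 4*(x+1-z)*(x+z+2) = (2*z+1)^2" by (simp add: power2_eq_square algebra_simps)
    have P: "x+z+2 > 0" "2*z+1 > 0" using x0 by auto
    have l: "(2*x+3)^2 * (X / (x+z+2) / (2*z+1)) - 4*(X * (x+1-z)) / (2*z+1) = X*((2*x+3)^2 - 4*(x+1-z)*(x+z+2))/((x+z+2)*(2*z+1))"
      using P by (simp add: divide_simps; simp add: algebra_simps)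
    have r: "X - X * (x+1-z)/(x+z+2) = X*(2*z+1)/(x+z+2)"
      using P by (simp add: field_simps)
    have c: "X*(2*z+1)^2/((x+z+2)*(2*z+1)) = X*(2*z+1)/(x+z+2)"
      using P by (simp add: power2_eq_square)
    show ?thesis unfolding l r poly c ..
  qed
  moreover have "4*(real m+1)^2 * (mu m k / (2*real k+1)) = 4*(X * (x+1-z)) / (2*z+1)"
    using e3 unfolding x_def z_def by (simp add: field_simps)
  moreover have "(2*real m+3)^2 * (mu (Suc m) k / (2*real k+1)) = (2*x+3)^2 * (X / (x+z+2) / (2*z+1))"
    unfolding e1 x_def z_def by simp
  moreover have "hh (Suc m) k - hh (Suc m) (Suc k) = X - X * (x+1-z)/(x+z+2)"
    unfolding e2 X_def ..
  ultimately show ?thesis by simp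
qed

lemma sig_rec: "(2*real m+3)^2 * sig (Suc m) - 4*(real m+1)^2 * sig m = 1"
proof -
  have s2: "sig m = (\<Sum>k<Suc (Suc m). mu m k / (2*real k+1))"
    unfolding sig_def by (simp add: mu_zero)
  have "(2*real m+3)^2 * sig (Suc m) - 4*(real m+1)^2 * sig m =
        (\<Sum>k<Suc (Suc m). (2*real m+3)^2 * (mu (Suc m) k / (2*real k+1)) - 4*(real m+1)^2 * (mu m k / (2*real k+1)))"
  proof -
    have a: "(2*real m+3)^2 * sig (Suc m) = (\<Sum>k<Suc (Suc m). (2*real m+3)^2 * (mu (Suc m) k / (2*real k+1)))"
      unfolding sig_def by (rule sum_distrib_left)
    have b: "4*(real m+1)^2 * sig m = (\<Sum>k<Suc (Suc m). 4*(real m+1)^2 * (mu m k / (2*real k+1)))"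
      unfolding s2 by (rule sum_distrib_left)
    show ?thesis unfolding a b by (rule sum_subtractf[symmetric])
  qed
  also have "\<dots> = (\<Sum>k<Suc (Suc m). hh (Suc m) k - hh (Suc m) (Suc k))"
    unfolding T_id ..
  also have "\<dots> = 1" by (subst sum_lessThan_telescope') (simp add: hh_zero)
  finally show ?thesis .
qed

lemma sig_closed: "(2*real m+1)^2 * cc m * sig m = AA m"
proof (induction m)
  case 0 then show ?case by (simp add: sig_def AA_def mu_def)
next
  case (Suc m)
  have "(2*real (Suc m)+1)^2 * cc (Suc m) * sig (Suc m) = cc (Suc m) * ((2*real m+3)^2 * sig (Suc m))"
    by (simp add: algebra_simps)
  also have "(2*real m+3)^2 * sig (Suc m) = 1 + 4*(real m+1)^2 * sig m"
    using sig_rec[of m] by simp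
  also have "cc (Suc m) * (1 + 4*(real m+1)^2 * sig m) = cc (Suc m) + (2*real m+1)^2 * cc m * sig m"
  proof -
    have "(2*real m+2)^2 = 4*(real m+1)^2" by (simp add: power2_eq_square algebra_simps)
    then show ?thesis unfolding cc_Suc by (simp add: divide_simps; simp add: algebra_simps)
  qed
  also have "\<dots> = AA (Suc m)"
    unfolding Suc.IH by (simp add: AA_def algebra_simps)
  finally show ?case .
qed

lemma D_sums: "(\<lambda>m. cc m * sig m) sums (\<Sum>k. 4 / (pi * (2*real k+1)^2) / (2*real k+1))"
proof (rule swap_sums[where f = "\<lambda>m k. cc m * mu m k / (2*real k+1)"])
  fix k
  show "(\<lambda>m. cc m * mu m k / (2*real k+1)) sums (4 / (pi * (2*real k+1)^2) / (2*real k+1))"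
    by (intro sums_divide col_sums)
  show "(\<lambda>m. \<bar>cc m * mu m k / (2*real k+1)\<bar>) sums (4 / (pi * (2*real k+1)^2) / (2*real k+1))"
  proof -
    have eq: "(\<lambda>m. \<bar>cc m * mu m k / (2*real k+1)\<bar>) = (\<lambda>m. cc m * mu m k / (2*real k+1))"
      using cc_nonneg mu_nonneg by (intro ext) (simp add: abs_of_nonneg)
    show ?thesis unfolding eq by (rule sums_divide[OF col_sums])
  qed
next
  show "summable (\<lambda>k. 4 / (pi * (2*real k+1)^2) / (2*real k+1))"
    using summable_mult[OF summable_cube, of "4/pi"] by (simp add: power3_eq_cube power2_eq_square field_simps)
next
  fix m
  show "(\<lambda>k. cc m * mu m k / (2*real k+1)) sums (cc m * sig m)"
  proof -
    have "(\<lambda>k. cc m * mu m k / (2*real k+1)) sums (\<Sum>k\<in>{..<Suc m}. cc m * mu m k / (2*real k+1))"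
      by (rule sums_finite) (auto simp: mu_zero)
    moreover have "(\<Sum>k\<in>{..<Suc m}. cc m * mu m k / (2*real k+1)) = cc m * sig m"
      unfolding sig_def sum_distrib_left by (rule sum.cong) auto
    ultimately show ?thesis by simp
  qed
qed

lemma alt_id: "(\<Sum>k<Suc m. (-1)^k * mu m k) = 1 / (2*real m+1)"
proof -
  have e: "(2*real m+1) * ((-1)^k * mu m k) = (-1)^k * hh m k - (-1)^(Suc k) * hh m (Suc k)" for k
    unfolding mu_def by (simp add: divide_simps; simp add: algebra_simps)
  have "(2*real m+1) * (\<Sum>k<Suc m. (-1)^k * mu m k) = (\<Sum>k<Suc m. (-1)^k * hh m k - (-1)^(Suc k) * hh m (Suc k))"
    unfolding sum_distrib_left e ..
  also have "\<dots> = 1" by (subst sum_lessThan_telescope') (simp add: hh_zero)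
  finally show ?thesis by (simp add: field_simps)
qed

lemma I_sums: "(\<lambda>m. cc m / (2*real m+1)) sums (\<Sum>k. (-1)^k * (4 / (pi * (2*real k+1)^2)))"
proof (rule swap_sums[where f = "\<lambda>m k. cc m * ((-1)^k * mu m k)"])
  fix k
  show "(\<lambda>m. cc m * ((-1)^k * mu m k)) sums ((-1)^k * (4 / (pi * (2*real k+1)^2)))"
    using sums_mult[OF col_sums[of k], of "(-1)^k"] by (simp add: algebra_simps)
  show "(\<lambda>m. \<bar>cc m * ((-1)^k * mu m k)\<bar>) sums (4 / (pi * (2*real k+1)^2))"
    using cc_nonneg mu_nonneg col_sums[of k] by (simp add: abs_mult)
next
  show "summable (\<lambda>k. 4 / (pi * (2*real k+1)^2))"
    using summable_mult[OF summable_sq, of "4/pi"] by simp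
next
  fix m
  have "(\<lambda>k. cc m * ((-1)^k * mu m k)) sums (\<Sum>k\<in>{..<Suc m}. cc m * ((-1)^k * mu m k))"
    by (rule sums_finite) (auto simp: mu_zero)
  then show "(\<lambda>k. cc m * ((-1)^k * mu m k)) sums (cc m / (2*real m+1))"
    by (simp only: sum_distrib_left[symmetric] alt_id) simp
qed

lemma I_summable: "summable (\<lambda>m. cc m / (2*real m+1))"
  using I_sums by (rule sums_summable)

lemma tail_sums: "(\<lambda>m. AA m * (1/(2*real m+1) - 1/(2*real m+3))) sums (\<Sum>j. cc j / (2*real j+1))"
proof (rule swap_sums[where f = "\<lambda>m j. cc j * (1/(2*real (max j m)+1) - 1/(2*real (max j (Suc m))+1))"])
  fix j
  define g where "g m = 1/(2*real (max j m)+1)" for m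
  have gl: "g \<longlonglongrightarrow> 0"
  proof (rule Lim_null_comparison)
    show "\<forall>\<^sub>F m in sequentially. norm (g m) \<le> 1/(2*real m+1)"
      by (intro always_eventually allI) (simp add: g_def divide_simps)
    show "(\<lambda>m. 1/(2*real m+1)) \<longlonglongrightarrow> 0" by real_asymp
  qed
  have s0: "(\<lambda>m. g m - g (Suc m)) sums (1/(2*real j+1))" using telescope_sums'[OF gl] by (simp add: g_def)
  have s: "(\<lambda>m. cc j * (g m - g (Suc m))) sums (cc j / (2*real j+1))"
    using sums_mult[OF s0, of "cc j"] by simp
  then show "(\<lambda>m. cc j * (1/(2*real (max j m)+1) - 1/(2*real (max j (Suc m))+1))) sums (cc j / (2*real j+1))"
    by (simp add: g_def)
  have nn: "cc j * (1/(2*real (max j m)+1) - 1/(2*real (max j (Suc m))+1)) \<ge> 0" for m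
    using cc_nonneg[of j] by (intro mult_nonneg_nonneg) (auto simp: divide_simps)
  show "(\<lambda>m. \<bar>cc j * (1/(2*real (max j m)+1) - 1/(2*real (max j (Suc m))+1))\<bar>) sums (cc j / (2*real j+1))"
    using s nn by (simp add: g_def)
next
  show "summable (\<lambda>j. cc j / (2*real j+1))" by (rule I_summable)
next
  fix m
  have "(\<lambda>j. cc j * (1/(2*real (max j m)+1) - 1/(2*real (max j (Suc m))+1))) sums
        (\<Sum>j\<in>{..<Suc m}. cc j * (1/(2*real (max j m)+1) - 1/(2*real (max j (Suc m))+1)))"
    by (rule sums_finite) (auto simp: max_def)
  moreover have "(\<Sum>j\<in>{..<Suc m}. cc j * (1/(2*real (max j m)+1) - 1/(2*real (max j (Suc m))+1))) =
      AA m * (1/(2*real m+1) - 1/(2*real m+3))"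
    unfolding AA_def sum_distrib_right by (rule sum.cong) (auto simp: max_def)
  ultimately show "(\<lambda>j. cc j * (1/(2*real (max j m)+1) - 1/(2*real (max j (Suc m))+1))) sums (AA m * (1/(2*real m+1) - 1/(2*real m+3)))"
    by simp
qed

lemma inner_sums: "(\<lambda>n. (real ((2*m) choose m))^2 * (real ((2*n) choose n))^2
            / (16 ^ (m + n) * (real (m + n) + 1) * (2 * real m + 3)))
     sums (4/pi * (AA m / ((2*real m+1)^2 * (2*real m+3))))"
proof -
  have e: "(real ((2*m) choose m))^2 * (real ((2*n) choose n))^2
            / (16 ^ (m + n) * (real (m + n) + 1) * (2 * real m + 3)) = (cc m / (2*real m+3)) * (cc n / (real n + real m + 1))" for n
    unfolding cc_def by (simp add: power_add field_simps)
  have "(\<lambda>n. (cc m / (2*real m+3)) * (cc n / (real n + real m + 1))) sums ((cc m / (2*real m+3)) * SS m)"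
    by (intro sums_mult S_sums)
  moreover have "(cc m / (2*real m+3)) * SS m = 4/pi * (AA m / ((2*real m+1)^2 * (2*real m+3)))"
  proof -
    have q: "(2*real m+1)^2 > 0" by simp
    have h: "(2*real m+1)^2 * (cc m * SS m) = 4/pi * AA m" using SS_closed[of m] by (simp add: mult.assoc)
    have "cc m * SS m = (4/pi * AA m) / (2*real m+1)^2" using h q by (simp add: eq_divide_eq algebra_simps)
    then have "(cc m / (2*real m+3)) * SS m = (4/pi * AA m) / (2*real m+1)^2 / (2*real m+3)" by simp
    then show ?thesis by simp
  qed
  ultimately show ?thesis unfolding e by simp
qed

lemma lam3: "(\<lambda>k. 1 / (2*real k+1)^3) sums (7/8 * zeta 3)"
proof -
  define e where "e n = 1 / (real n + 1)^3" for n
  have zs: "summable e"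
  proof -
    have "summable (\<lambda>n. inverse (real n ^ 3))" by (rule inverse_power_summable) simp
    then have "summable (\<lambda>n. inverse (real (Suc n) ^ 3))" by (subst summable_Suc_iff)
    moreover have "(\<lambda>n. inverse (real (Suc n) ^ 3)) = e" by (rule ext) (simp add: e_def inverse_eq_divide add.commute)
    ultimately show ?thesis by simp
  qed
  have z: "zeta 3 = suminf e"
    unfolding zeta_def e_def by (simp add: divide_simps add.commute)
  have "e sums zeta 3" using zs z by (simp add: sums_iff)
  then have g: "(\<lambda>n. sum e {n * 2 ..< n * 2 + 2}) sums zeta 3" by (rule sums_group) simp
  have ge: "sum e {n * 2 ..< n * 2 + 2} = 1/(2*real n+1)^3 + 1/8 * e n" for n
  proof -
    have "{n * 2 ..< n * 2 + 2} = {2*n, Suc (2*n)}" by auto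
    then have "sum e {n * 2 ..< n * 2 + 2} = e (2*n) + e (Suc (2*n))" by simp
    moreover have "e (Suc (2*n)) = 1/8 * e n"
      unfolding e_def by (simp add: divide_simps; simp add: algebra_simps power3_eq_cube)
    moreover have "e (2*n) = 1/(2*real n+1)^3" unfolding e_def by simp
    ultimately show ?thesis by simp
  qed
  have "(\<lambda>n. sum e {n * 2 ..< n * 2 + 2} - 1/8 * e n) sums (zeta 3 - 1/8 * zeta 3)"
    by (intro sums_diff g sums_mult) (use \<open>e sums zeta 3\<close> in auto)
  then show ?thesis unfolding ge by simp
qed

theorem mainTheorem12:
  shows "(\<Sum>m. \<Sum>n. (real ((2*m) choose m))^2 * (real ((2*n) choose n))^2
            / (16 ^ (m + n) * (real (m + n) + 1) * (2 * real m + 3)))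
         = (7 * zeta 3 - 4 * catalan) / pi^2"
proof -
  have inner: "(\<Sum>n. (real ((2*m) choose m))^2 * (real ((2*n) choose n))^2
            / (16 ^ (m + n) * (real (m + n) + 1) * (2 * real m + 3)))
        = 4/pi * (1/2 * (cc m * sig m) - 1/4 * (AA m * (1/(2*real m+1) - 1/(2*real m+3))))" for m
  proof -
    have "AA m / ((2*real m+1)^2 * (2*real m+3)) = 1/2 * (cc m * sig m) - 1/4 * (AA m * (1/(2*real m+1) - 1/(2*real m+3)))"
    proof -
      have q: "(2*real m+1)^2 > 0" by simp
      have cs: "cc m * sig m = AA m / (2*real m+1)^2"
        using sig_closed[of m] q by (simp add: eq_divide_eq algebra_simps)
      have key: "\<And>A a b::real. a > 0 \<Longrightarrow> b = a+2 \<Longrightarrow> A / (a^2 * b) = 1/2 * (A / a^2) - 1/4 * (A * (1/a - 1/b))"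
        by (simp add: divide_simps; simp add: algebra_simps power2_eq_square)
      show ?thesis unfolding cs by (rule key) auto
    qed
    moreover have "(\<Sum>n. (real ((2*m) choose m))^2 * (real ((2*n) choose n))^2
            / (16 ^ (m + n) * (real (m + n) + 1) * (2 * real m + 3))) = 4/pi * (AA m / ((2*real m+1)^2 * (2*real m+3)))"
      by (rule sums_unique[OF inner_sums, symmetric])
    ultimately show ?thesis by simp
  qed
  have D: "(\<lambda>m. cc m * sig m) sums (4/pi * (7/8 * zeta 3))"
  proof -
    have "(\<lambda>k. 4/pi * (1 / (2*real k+1)^3)) sums (4/pi * (7/8 * zeta 3))"
      by (intro sums_mult lam3)
    moreover have "(\<lambda>k. 4/pi * (1 / (2*real k+1)^3)) = (\<lambda>k. 4 / (pi * (2*real k+1)^2) / (2*real k+1))"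
      by (rule ext) (simp add: power3_eq_cube power2_eq_square)
    ultimately have "(\<lambda>k. 4 / (pi * (2*real k+1)^2) / (2*real k+1)) sums (4/pi * (7/8 * zeta 3))"
      by simp
    then have "(\<Sum>k. 4 / (pi * (2*real k+1)^2) / (2*real k+1)) = 4/pi * (7/8 * zeta 3)"
      by (rule sums_unique[symmetric])
    then show ?thesis using D_sums by simp
  qed
  have I: "(\<lambda>m. AA m * (1/(2*real m+1) - 1/(2*real m+3))) sums (4/pi * catalan)"
  proof -
    have cs: "summable (\<lambda>n. (-1) ^ n / (2 * real n + 1) ^ 2 :: real)"
      by (rule summable_comparison_test[OF _ summable_sq]) auto
    have "(\<lambda>k. 4/pi * ((-1) ^ k / (2 * real k + 1) ^ 2)) sums (4/pi * catalan)"
      unfolding catalan_def by (intro sums_mult summable_sums cs)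
    moreover have "(\<lambda>k. 4/pi * ((-1) ^ k / (2 * real k + 1) ^ 2)) = (\<lambda>k. (-1)^k * (4 / (pi * (2*real k+1)^2)))"
      by (rule ext) simp
    ultimately have "(\<lambda>k. (-1)^k * (4 / (pi * (2*real k+1)^2))) sums (4/pi * catalan)"
      by simp
    then have "(\<Sum>k. (-1)^k * (4 / (pi * (2*real k+1)^2))) = 4/pi * catalan"
      by (rule sums_unique[symmetric])
    moreover have "(\<Sum>j. cc j / (2*real j+1)) = (\<Sum>k. (-1)^k * (4 / (pi * (2*real k+1)^2)))"
      by (rule sums_unique[OF I_sums, symmetric])
    ultimately show ?thesis using tail_sums by simp
  qed
  have "(\<lambda>m. 4/pi * (1/2 * (cc m * sig m) - 1/4 * (AA m * (1/(2*real m+1) - 1/(2*real m+3)))))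
        sums (4/pi * (1/2 * (4/pi * (7/8 * zeta 3)) - 1/4 * (4/pi * catalan)))"
    by (intro sums_mult sums_diff D I)
  moreover have "4/pi * (1/2 * (4/pi * (7/8 * zeta 3)) - 1/4 * (4/pi * catalan)) = (7 * zeta 3 - 4 * catalan) / pi^2"
    by (simp add: field_simps power2_eq_square)
  ultimately have "(\<lambda>m. 4/pi * (1/2 * (cc m * sig m) - 1/4 * (AA m * (1/(2*real m+1) - 1/(2*real m+3)))))
        sums ((7 * zeta 3 - 4 * catalan) / pi^2)" by simp
  then show ?thesis unfolding inner by (rule sums_unique[symmetric])
qed

end
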